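(* Let $q$ be a power of the prime $p$ and $n$ a positive integer. Let $h\in\mathbb{F}_q[x]$ with $\gcd\left(h(x),\frac{x^n-1}{x-1}\right)=1$, and let $m$ be a positive integer with $m<q-1$ and $\gcd(m,q-1)=1$. Then: (i) if $m=1$, then for every $\alpha,\theta_0,\ldots,\theta_{q-1}\in\mathbb{F}_{q^n}$ with $\mathrm{Tr}_{q^n/q}(\alpha)\neq -h(1)$, the polynomial $$P(x)=L_h(x)+\alpha\cdot\mathrm{Tr}_{q^n/q}(x)+\sum_{i=0}^{q-1}(\theta_i^q-\theta_i)\cdot\mathrm{Tr}_{q^n/q}(x)^i$$ is a permutation polynomial of $\mathbb{F}_{q^n}$; in particular, if $p\nmid n$, one may take $\alpha$ to be any element of $\mathbb{F}_q\setminus\{-\frac{h(1)}{n}\}$; (ii) if $m>1$, then for every $\alpha,\beta,\theta_0,\ldots,\theta_{q-1}\in\mathbb{F}_{q^n}$ with $\mathrm{Tr}_{q^n/q}(\alpha)=-h(1)$ and $\mathrm{Tr}_{q^n/q}(\beta)\neq 0$, the polynomial $$P(x)=L_h(x)+\alpha\cdot\mathrm{Tr}_{q^n/q}(x)+\beta\cdot\mathrm{Tr}_{q^n/q}(x)^m+\sum_{i=0}^{q-1}(\theta_i^q-\theta_i)\cdot\mathrm{Tr}_{q^n/q}(x)^i$$ is a permutation polynomial of $\mathbb{F}_{q^n}$; in particular, if $p\nmid n$, one may take $\alpha=-\frac{h(1)}{n}$ and $\beta$ any nonzero element of $\mathbb{F}_q$.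
   Context: For $u(x)=\sum_{i=0}^m a_i x^i\in\mathbb{F}_q[x]$, its linearized $q$-associate is $L_u(x)=\sum_{i=0}^m a_i x^{q^i}$. $\mathrm{Tr}_{q^n/q}(x)=x+x^q+\cdots+x^{q^{n-1}}$. A permutation polynomial of a finite field is a polynomial inducing a bijection of it. *)

theory Defs
  imports "HOL-Computational_Algebra.Computational_Algebra" "HOL-Library.Cardinality"
begin

definition trace :: "nat \<Rightarrow> nat \<Rightarrow> 'a::field \<Rightarrow> 'a" where
  "trace q n x = (\<Sum>i<n. x ^ (q ^ i))"

definition lin_assoc :: "nat \<Rightarrow> 'a::field poly \<Rightarrow> 'a \<Rightarrow> 'a" where
  "lin_assoc q u x = (\<Sum>i\<le>degree u. coeff u i * x ^ (q ^ i))"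

definition subfield_q :: "nat \<Rightarrow> 'a::field set" where
  "subfield_q q = {a. a ^ q = a}"

end

theory Submission
  imports Defs
begin

lemma char_prime_ff: "prime CHAR('a::{finite,field})"
  by (intro prime_CHAR_semidom finite_imp_CHAR_pos) simp

lemma of_nat_mod_CHAR: "(of_nat (i mod CHAR('a)) :: 'a::semiring_1) = of_nat i"
proof -
  have "(of_nat i :: 'a) = of_nat (CHAR('a) * (i div CHAR('a)) + i mod CHAR('a))" by simp
  also have "\<dots> = of_nat (i mod CHAR('a))" by (simp only: of_nat_add of_nat_mult of_nat_CHAR) simp
  finally show ?thesis by simp
qed

lemma CHAR_dvd_CARD_ff: "CHAR('a::{finite,field}) dvd CARD('a)"
proof -
  define c where "c = CHAR('a)"
  have c0: "c > 0" unfolding c_def by (intro finite_imp_CHAR_pos) simp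
  define r where "r = {(x::'a, y). \<exists>i. y = x + of_nat i}"
  have eq: "equiv UNIV r"
  proof (rule equivI)
    show "refl r" unfolding r_def refl_on_def by (auto intro: exI[of _ 0])
    show "sym r" unfolding r_def sym_def
    proof (clarify)
      fix x :: 'a and i
      have "i \<le> c * i" using c0 by simp
      hence "(of_nat (c * i - i) :: 'a) = - of_nat i"
        by (simp add: of_nat_diff c_def)
      thus "\<exists>j. x = x + of_nat i + of_nat j" by (intro exI[of _ "c * i - i"]) simp
    qed
    show "trans r" unfolding r_def trans_def
      by clarify (metis add.assoc of_nat_add)
  qed simp
  have cls: "X \<in> UNIV // r \<Longrightarrow> c dvd card X" for X
  proof -
    assume "X \<in> UNIV // r"
    then obtain x where X: "X = r `` {x}" by (auto simp: quotient_def)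
    have "X = (\<lambda>i. x + of_nat i) ` {..<c}"
    proof safe
      fix y assume "y \<in> X"
      then obtain i where "y = x + of_nat i" using X r_def by auto
      hence "y = x + of_nat (i mod c)" by (simp add: c_def of_nat_mod_CHAR)
      thus "y \<in> (\<lambda>i. x + of_nat i) ` {..<c}" using c0 by auto
    next
      fix i show "x + of_nat i \<in> X" using X r_def by auto
    qed
    moreover have "inj_on (\<lambda>i. x + (of_nat i :: 'a)) {..<c}"
    proof (rule inj_onI)
      fix i j assume ij: "i \<in> {..<c}" "j \<in> {..<c}" "x + of_nat i = x + (of_nat j :: 'a)"
      have *: "a < c \<Longrightarrow> b < c \<Longrightarrow> a \<le> b \<Longrightarrow> (of_nat a :: 'a) = of_nat b \<Longrightarrow> a = b" for a b
      proof -
        assume "a < c" "b < c" "a \<le> b" "(of_nat a :: 'a) = of_nat b"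
        hence "(of_nat (b - a) :: 'a) = 0" by (simp add: of_nat_diff)
        hence "c dvd (b - a)" by (simp add: c_def of_nat_eq_0_iff_char_dvd)
        moreover have "b - a < c" using \<open>b < c\<close> by simp
        ultimately show "a = b" using \<open>a \<le> b\<close> by (metis diff_is_0_eq dvd_imp_le le_antisym not_le zero_less_diff)
      qed
      show "i = j" using ij *[of i j] *[of j i] by (cases "i \<le> j") auto
    qed
    ultimately show "c dvd card X" by (simp add: card_image)
  qed
  show ?thesis using equiv_imp_dvd_card[OF _ eq cls] unfolding c_def by simp
qed

lemma char_eq_ff:
  assumes "prime p" "k \<ge> 1" "n \<ge> 1" "CARD('a::{finite,field}) = (p ^ k) ^ n"
  shows "CHAR('a) = p"
proof -
  have "CHAR('a) dvd p ^ (k*n)" using CHAR_dvd_CARD_ff[where 'a='a] assms(4) by (simp add: power_mult)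
  hence "CHAR('a) dvd p" using char_prime_ff[where 'a='a] prime_dvd_power by blast
  thus ?thesis using char_prime_ff[where 'a='a] assms(1) by (simp add: primes_dvd_imp_eq)
qed

lemma pow_card_ff: "(x::'a::{finite,field}) ^ CARD('a) = x"
proof (cases "x = 0")
  case False
  have "x * (\<Prod>y\<in>UNIV-{0}. x * y) = x * x ^ (card (UNIV :: 'a set) - 1) * \<Prod>(UNIV-{0})"
    by (simp add: prod.distrib mult_ac)
  also have "x * x ^ (card (UNIV :: 'a set) - 1) = x ^ Suc (card (UNIV :: 'a set) - 1)"
    by (subst power_Suc) auto
  also have "Suc (card (UNIV :: 'a set) - 1) = card (UNIV :: 'a set)"
    using finite_UNIV_card_ge_0[where ?'a = 'a] by simp
  also have "(\<Prod>y\<in>UNIV-{0}. x * y) = (\<Prod>y\<in>UNIV-{0}. y)"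
    by (rule prod.reindex_bij_witness[of _ "\<lambda>y. y / x" "\<lambda>y. x * y"]) (use False in auto)
  finally show ?thesis
    by simp
qed (use finite_UNIV_card_ge_0[where ?'a = 'a] in auto)

context
  fixes q n k :: nat
  assumes qc: "q = CHAR('a::{finite,field}) ^ k"
begin

lemma frob_add: "((x::'a) + y) ^ (q ^ i) = x ^ (q ^ i) + y ^ (q ^ i)"
  by (rule freshmans_dream') (auto simp: qc char_prime_ff power_mult[symmetric])

lemma q_pos: "q > 0"
  using qc char_prime_ff[where 'a='a] by (simp add: prime_gt_0_nat)

lemma frob_sum: "(\<Sum>j\<in>A. f j :: 'a) ^ (q ^ i) = (\<Sum>j\<in>A. f j ^ (q ^ i))"
  by (induction A rule: infinite_finite_induct) (auto simp: frob_add q_pos)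

lemma frob_minus: "(- (x::'a)) ^ (q ^ i) = - (x ^ (q ^ i))"
proof -
  have "(- x + x) ^ (q ^ i) = 0" using q_pos by simp
  hence "(- x) ^ (q ^ i) + x ^ (q ^ i) = 0" by (simp only: frob_add)
  thus ?thesis by (simp add: add_eq_0_iff2)
qed

lemma frob_diff: "((x::'a) - y) ^ (q ^ i) = x ^ (q ^ i) - y ^ (q ^ i)"
  using frob_add[of x "-y" i] frob_minus[of y i] by simp

lemma frob1: "((x::'a) + y) ^ q = x ^ q + y ^ q"
  using frob_add[of x y 1] by simp

end

context
  fixes q n k :: nat
  assumes qc: "q = CHAR('a::{finite,field}) ^ k"
    and card: "CARD('a) = q ^ n"
begin

lemma pow_qn: "(x::'a) ^ (q ^ n) = x"
  using pow_card_ff[of x] card by simp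

lemma Fq_pow: "(c::'a) ^ q = c \<Longrightarrow> c ^ (q ^ i) = c"
  by (induction i) (auto simp: power_mult power_Suc2 simp del: power_Suc)

lemma trace_add: "trace q n ((x::'a) + y) = trace q n x + trace q n y"
  unfolding trace_def by (simp add: frob_add[OF qc] sum.distrib)

lemma trace_diff: "trace q n ((x::'a) - y) = trace q n x - trace q n y"
  unfolding trace_def by (simp add: frob_diff[OF qc] sum_subtractf)

lemma trace_sum: "trace q n (\<Sum>j\<in>A. f j :: 'a) = (\<Sum>j\<in>A. trace q n (f j))"
  unfolding trace_def by (simp add: frob_sum[OF qc] sum.swap[of _ A])

lemma trace_pow_q: "trace q n ((x::'a) ^ q) = trace q n x"
proof -
  define f where "f i = x ^ (q ^ i)" for i
  have "trace q n (x ^ q) = (\<Sum>i<n. f (Suc i))"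
    unfolding trace_def f_def by (simp add: power_mult[symmetric] mult.commute)
  also have "\<dots> = (\<Sum>i<Suc n. f i) - f 0" by (simp only: sum.lessThan_Suc_shift) simp
  also have "\<dots> = (\<Sum>i<n. f i)" by (simp add: f_def pow_qn)
  finally show ?thesis unfolding trace_def f_def .
qed

lemma trace_Fq: "trace q n (x::'a) ^ q = trace q n x"
proof -
  have "trace q n x ^ q = trace q n (x ^ q)"
    unfolding trace_def using frob_sum[OF qc, of "\<lambda>i. x ^ (q ^ i)" "{..<n}" 1]
    by (simp add: power_mult[symmetric] mult.commute)
  thus ?thesis by (simp add: trace_pow_q)
qed

lemma trace_smult: "(c::'a) ^ q = c \<Longrightarrow> trace q n (c * x) = c * trace q n x"
  unfolding trace_def by (simp add: power_mult_distrib Fq_pow sum_distrib_left)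

lemma trace_const: "(c::'a) ^ q = c \<Longrightarrow> trace q n c = of_nat n * c"
  unfolding trace_def by (simp add: Fq_pow)

lemma trace_art: "trace q n ((\<theta>::'a) ^ q - \<theta>) = 0"
  by (simp add: trace_diff trace_pow_q)


lemma lin_ext: "degree u \<le> N \<Longrightarrow> lin_assoc q u (x::'a) = (\<Sum>i\<le>N. coeff u i * x ^ (q ^ i))"
  unfolding lin_assoc_def
  by (rule sum.mono_neutral_left) (auto simp: coeff_eq_0)

lemma lin_add: "lin_assoc q (u + v) (x::'a) = lin_assoc q u x + lin_assoc q v x"
proof -
  define N where "N = max (degree u) (degree v)"
  have "degree (u + v) \<le> N" "degree u \<le> N" "degree v \<le> N"
    using degree_add_le_max[of u v] by (auto simp: N_def)
  thus ?thesis by (simp add: lin_ext[of _ N] sum.distrib distrib_right)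
qed

lemma lin_smult: "lin_assoc q (smult c u) (x::'a) = c * lin_assoc q u x"
  using lin_ext[of "smult c u" "degree u" x] by (simp add: lin_assoc_def sum_distrib_left mult.assoc)

lemma lin_zero: "lin_assoc q 0 (x::'a) = 0"
  by (simp add: lin_assoc_def)

lemma lin_pCons: "lin_assoc q (pCons c u) (x::'a) = c * x + lin_assoc q u (x ^ q)"
proof -
  have "degree (pCons c u) \<le> Suc (degree u)" by (simp add: degree_pCons_le)
  hence "lin_assoc q (pCons c u) x = (\<Sum>i\<le>Suc (degree u). coeff (pCons c u) i * x ^ (q ^ i))"
    by (rule lin_ext)
  also have "\<dots> = c * x + (\<Sum>i\<le>degree u. coeff u i * x ^ (q ^ Suc i))"
    by (simp only: sum.atMost_Suc_shift) simp
  also have "(\<Sum>i\<le>degree u. coeff u i * x ^ (q ^ Suc i)) = lin_assoc q u (x ^ q)"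
    unfolding lin_assoc_def by (simp add: power_mult[symmetric] mult.commute)
  finally show ?thesis .
qed

lemma lin_one: "lin_assoc q 1 (x::'a) = x"
  by (simp add: lin_assoc_def)

lemma lin_addx: "lin_assoc q u ((x::'a) + y) = lin_assoc q u x + lin_assoc q u y"
  unfolding lin_assoc_def by (simp add: frob_add[OF qc] sum.distrib distrib_left)

lemma lin_diffx: "lin_assoc q u ((x::'a) - y) = lin_assoc q u x - lin_assoc q u y"
  unfolding lin_assoc_def by (simp add: frob_diff[OF qc] sum_subtractf right_diff_distrib)

lemma lin_frob:
  assumes "\<forall>i. coeff u i ^ q = coeff u i"
  shows "lin_assoc q u ((x::'a) ^ q) = lin_assoc q u x ^ q"
proof -
  have "lin_assoc q u x ^ q = (\<Sum>i\<le>degree u. (coeff u i * x ^ (q ^ i)) ^ (q ^ 1))"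
    unfolding lin_assoc_def by (subst frob_sum[OF qc, symmetric]) simp
  also have "\<dots> = lin_assoc q u (x ^ q)"
    unfolding lin_assoc_def using assms
    by (simp add: power_mult_distrib power_mult[symmetric] mult.commute)
  finally show ?thesis by simp
qed

lemma lin_mult:
  assumes "\<forall>i. coeff h i ^ q = coeff h i"
  shows "lin_assoc q (a * h) (z::'a) = lin_assoc q a (lin_assoc q h z)"
proof (induction a arbitrary: z)
  case 0
  then show ?case by (simp add: lin_zero)
next
  case (pCons c a)
  have "lin_assoc q (pCons c a * h) z = c * lin_assoc q h z + lin_assoc q (a * h) (z ^ q)"
    by (simp add: lin_add lin_smult lin_pCons lin_zero)
  also have "\<dots> = c * lin_assoc q h z + lin_assoc q a (lin_assoc q h z ^ q)"
    using pCons.IH lin_frob[OF assms] by simp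
  also have "\<dots> = lin_assoc q (pCons c a) (lin_assoc q h z)"
    by (simp add: lin_pCons)
  finally show ?case .
qed

lemma lin_monom1: "lin_assoc q (monom 1 i) (x::'a) = x ^ (q ^ i)"
proof -
  have "lin_assoc q (monom 1 i) x = (\<Sum>j\<in>insert i {..<i}. coeff (monom 1 i) j * x ^ (q ^ j))"
    unfolding lin_assoc_def by (simp add: degree_monom_eq lessThan_Suc_atMost[symmetric])
  also have "\<dots> = x ^ (q ^ i)"
    by (subst sum.insert) (auto simp: coeff_monom)
  finally show ?thesis .
qed

lemma lin_sum: "lin_assoc q (\<Sum>j\<in>A. f j) (x::'a) = (\<Sum>j\<in>A. lin_assoc q (f j) x)"
  by (induction A rule: infinite_finite_induct) (auto simp: lin_zero lin_add)

lemma trace_lin: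
  assumes "\<forall>i. coeff h i ^ q = coeff h i"
  shows "trace q n (lin_assoc q h (x::'a)) = poly h 1 * trace q n x"
proof -
  have "trace q n (lin_assoc q h x) = (\<Sum>i\<le>degree h. trace q n (coeff h i * x ^ (q ^ i)))"
    unfolding lin_assoc_def by (simp add: trace_sum)
  also have "\<dots> = (\<Sum>i\<le>degree h. coeff h i * trace q n x)"
  proof (rule sum.cong[OF refl])
    fix i
    have "trace q n (x ^ (q ^ i)) = trace q n x"
      by (induction i) (auto simp: power_mult trace_pow_q power_Suc2 simp del: power_Suc)
    thus "trace q n (coeff h i * x ^ (q ^ i)) = coeff h i * trace q n x"
      using assms by (simp add: trace_smult)
  qed
  also have "\<dots> = poly h 1 * trace q n x"
    by (simp add: poly_altdef sum_distrib_right)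
  finally show ?thesis .
qed


lemma Phi_eq: "(monom 1 n - 1) div [:-1, 1:] = (\<Sum>i<n. monom (1::'a) i)"
proof -
  have x1: "[:-1, 1:] = monom (1::'a) 1 - 1" by (simp add: monom_Suc one_pCons)
  have "[:-1, 1:] * (\<Sum>i<n. monom (1::'a) i) = (\<Sum>i<n. monom 1 (Suc i) - monom 1 i)"
    unfolding x1 by (simp add: sum_distrib_left left_diff_distrib mult_monom)
  also have "\<dots> = monom 1 n - monom 1 0" by (rule sum_lessThan_telescope)
  finally have "[:-1, 1:] * (\<Sum>i<n. monom (1::'a) i) = monom 1 n - 1" by (simp add: one_pCons monom_0)
  hence "(monom 1 n - 1) div [:-1, 1:] = ([:-1, 1:] * (\<Sum>i<n. monom (1::'a) i)) div [:-1, 1:]" by simp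
  also have "\<dots> = (\<Sum>i<n. monom (1::'a) i)" by (rule nonzero_mult_div_cancel_left) simp
  finally show ?thesis .
qed

lemma Phi_Fq: "\<forall>j. coeff (\<Sum>i<n. monom (1::'a) i) j ^ q = coeff (\<Sum>i<n. monom (1::'a) i) j"
proof
  fix j
  have "coeff (\<Sum>i<n. monom (1::'a) i) j = (if j < n then 1 else 0)"
    by (simp add: coeff_sum coeff_monom)
  thus "coeff (\<Sum>i<n. monom (1::'a) i) j ^ q = coeff (\<Sum>i<n. monom (1::'a) i) j"
    using q_pos[OF qc] by simp
qed

lemma lin_Phi: "lin_assoc q (\<Sum>i<n. monom (1::'a) i) z = trace q n z"
  by (simp add: lin_sum lin_monom1 trace_def)

lemma lin_at0: "lin_assoc q u (0::'a) = 0"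
  unfolding lin_assoc_def using q_pos[OF qc] by (simp add: power_0_left)

lemma kernel_trivial:
  assumes hF: "\<forall>i. coeff h i ^ q = coeff h i"
    and cop: "coprime h ((monom 1 n - 1) div [:-1, 1:])"
    and "lin_assoc q h (z::'a) = 0" and "trace q n z = 0"
  shows "z = 0"
proof -
  define \<Phi> where "\<Phi> = (\<Sum>i<n. monom (1::'a) i)"
  have cop': "coprime h \<Phi>" using cop Phi_eq by (simp add: \<Phi>_def)
  define S where "S = {a * h + b * \<Phi> | a b. True}"
  have memS: "lin_assoc q s z = 0" if "s \<in> S" for s
  proof -
    obtain a b where s: "s = a * h + b * \<Phi>" using \<open>s \<in> S\<close> by (auto simp: S_def)
    have "lin_assoc q s z = lin_assoc q a (lin_assoc q h z) + lin_assoc q b (lin_assoc q \<Phi> z)"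
      using lin_mult[OF hF] lin_mult[OF Phi_Fq] by (simp add: s lin_add \<Phi>_def)
    also have "\<dots> = 0" using assms(3,4) by (simp add: \<Phi>_def lin_Phi lin_at0)
    finally show ?thesis .
  qed
  have closed: "s - c * t \<in> S" if "s \<in> S" "t \<in> S" for s t c
  proof -
    obtain a b where s: "s = a * h + b * \<Phi>" using \<open>s \<in> S\<close> by (auto simp: S_def)
    obtain a' b' where t: "t = a' * h + b' * \<Phi>" using \<open>t \<in> S\<close> by (auto simp: S_def)
    have "s - c * t = (a - c * a') * h + (b - c * b') * \<Phi>" by (simp add: s t algebra_simps)
    thus ?thesis by (auto simp: S_def)
  qed
  have hS: "h \<in> S" unfolding S_def by (rule CollectI, rule exI[of _ 1], rule exI[of _ 0]) simp
  have PS: "\<Phi> \<in> S" unfolding S_def by (rule CollectI, rule exI[of _ 0], rule exI[of _ 1]) simp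
  have ex: "\<exists>g\<in>S. g \<noteq> 0"
  proof (cases "h = 0")
    case True
    hence "\<Phi> \<noteq> 0" using cop' by auto
    thus ?thesis using PS by blast
  qed (use hS in blast)
  define d where "d = (LEAST d. \<exists>g\<in>S. g \<noteq> 0 \<and> degree g = d)"
  have "\<exists>g\<in>S. g \<noteq> 0 \<and> degree g = d"
    unfolding d_def by (rule LeastI_ex) (use ex in blast)
  then obtain g where g: "g \<in> S" "g \<noteq> 0" "degree g = d" by blast
  have gmin: "degree g \<le> degree g'" if "g' \<in> S" "g' \<noteq> 0" for g'
    unfolding g(3) d_def by (rule Least_le) (use that in blast)
  have gdvd: "g dvd t" if "t \<in> S" for t
  proof -
    have "t mod g = t - (t div g) * g" by (simp add: minus_div_mult_eq_mod)
    also have "\<dots> \<in> S" using closed[OF that g(1), of "t div g"] by (simp add: mult.commute)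
    finally have tm: "t mod g \<in> S" .
    have "t mod g = 0"
    proof (rule ccontr)
      assume "t mod g \<noteq> 0"
      hence "degree (t mod g) < degree g" using degree_mod_less[OF g(2), of t] by simp
      thus False using gmin[OF tm \<open>t mod g \<noteq> 0\<close>] by simp
    qed
    thus ?thesis by (simp add: mod_eq_0_iff_dvd)
  qed
  have "is_unit g" using cop' gdvd[OF hS] gdvd[OF PS] by (auto simp: coprime_def)
  then obtain c where c: "g = [:c:]" "c dvd 1" using is_unit_poly_iff by blast
  have "c \<noteq> 0" using c by auto
  moreover have "c * z = 0" using memS[OF g(1)] c(1) by (simp add: lin_pCons lin_zero)
  ultimately show ?thesis by simp
qed

lemma bij_main:
  assumes hF: "\<forall>i. coeff h i ^ q = coeff h i"
    and cop: "coprime h ((monom 1 n - 1) div [:-1, 1:])"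
    and P: "\<And>x. P x = lin_assoc q h (x::'a) + g (trace q n x)"
    and tr: "\<And>x y. trace q n (P x) = trace q n (P y) \<Longrightarrow> trace q n x = trace q n y"
  shows "bij P"
proof -
  have "inj P"
  proof (rule injI)
    fix x y assume eq: "P x = P y"
    have t: "trace q n x = trace q n y" by (rule tr) (simp only: eq)
    hence "lin_assoc q h x = lin_assoc q h y" using eq P by simp
    hence "lin_assoc q h (x - y) = 0" by (simp add: lin_diffx)
    moreover have "trace q n (x - y) = 0" using t by (simp add: trace_diff)
    ultimately have "x - y = 0" using kernel_trivial[OF hF cop] by blast
    thus "x = y" by simp
  qed
  thus ?thesis unfolding bij_def using finite_UNIV_inj_surj[of P] by simp
qed


lemma Fq_power: "(t::'a) ^ q = t \<Longrightarrow> (t ^ i) ^ q = t ^ i"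
  by (metis power_mult mult.commute)

lemma trace_P:
  assumes hF: "\<forall>i. coeff h i ^ q = coeff h i"
  shows "trace q n (lin_assoc q h x + \<alpha> * trace q n x + \<beta> * trace q n x ^ m
          + (\<Sum>i=0..q-1. (\<theta> i ^ q - \<theta> i) * trace q n x ^ i))
        = (poly h 1 + trace q n \<alpha>) * trace q n (x::'a) + trace q n \<beta> * trace q n x ^ m"
proof -
  define t where "t = trace q n x"
  have tF: "t ^ q = t" unfolding t_def by (rule trace_Fq)
  have A: "trace q n (\<alpha> * t) = t * trace q n \<alpha>"
    using trace_smult[OF tF, of \<alpha>] by (simp add: mult.commute)
  have B: "trace q n (\<beta> * t ^ m) = t ^ m * trace q n \<beta>"
    using trace_smult[OF Fq_power[OF tF], of m \<beta>] by (simp add: mult.commute)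
  have C: "trace q n (\<Sum>i=0..q-1. (\<theta> i ^ q - \<theta> i) * t ^ i) = 0"
  proof -
    have "trace q n ((\<theta> i ^ q - \<theta> i) * t ^ i) = 0" for i
      using trace_smult[OF Fq_power[OF tF], of i "\<theta> i ^ q - \<theta> i"] by (simp add: mult.commute trace_art)
    thus ?thesis by (simp add: trace_sum)
  qed
  have "trace q n (lin_assoc q h x + \<alpha> * t + \<beta> * t ^ m
          + (\<Sum>i=0..q-1. (\<theta> i ^ q - \<theta> i) * t ^ i))
        = poly h 1 * t + t * trace q n \<alpha> + t ^ m * trace q n \<beta> + 0"
    by (simp only: trace_add trace_lin[OF hF] A B C t_def[symmetric])
  also have "\<dots> = (poly h 1 + trace q n \<alpha>) * t + trace q n \<beta> * t ^ m"
    by (simp add: algebra_simps)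
  finally show ?thesis unfolding t_def .
qed

lemma pow_qv: "(t::'a) ^ q = t \<Longrightarrow> t ^ ((q - 1) * v + 1) = t"
proof (induction v)
  case (Suc v)
  have "t ^ ((q - 1) * Suc v + 1) = t ^ ((q - 1) * v) * t ^ (q - 1 + 1)"
  proof -
    have e: "(q - 1) * Suc v + 1 = (q - 1) * v + (q - 1 + 1)" by simp
    show ?thesis by (simp only: e power_add)
  qed
  also have "q - 1 + 1 = q" using q_pos[OF qc] by simp
  also have "t ^ ((q - 1) * v) * t ^ q = t ^ ((q - 1) * v + 1)" using Suc.prems by simp
  also have "\<dots> = t" by (rule Suc.IH[OF Suc.prems])
  finally show ?case .
qed simp

lemma pow_inj:
  assumes "(t::'a) ^ q = t" "s ^ q = s" "coprime m (q - 1)" "m \<ge> 1" "t ^ m = s ^ m"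
  shows "t = s"
proof -
  obtain u v where uv: "m * u = (q - 1) * v + gcd m (q - 1)" using bezout_nat[of m "q - 1"] assms(4) by auto
  hence uv': "m * u = (q - 1) * v + 1" using assms(3) by simp
  have "t = t ^ (m * u)" using pow_qv[OF assms(1)] uv' by simp
  also have "\<dots> = s ^ (m * u)" by (simp add: power_mult assms(5))
  also have "\<dots> = s" using pow_qv[OF assms(2)] uv' by simp
  finally show ?thesis .
qed

lemma main_gen:
  assumes hF: "\<forall>i. coeff h i ^ q = coeff h i"
    and cop: "coprime h ((monom 1 n - 1) div [:-1, 1:])"
    and tr: "\<And>t s. t ^ q = t \<Longrightarrow> s ^ q = s \<Longrightarrow>
              (poly h 1 + trace q n \<alpha>) * t + trace q n \<beta> * t ^ m
               = (poly h 1 + trace q n \<alpha>) * s + trace q n \<beta> * s ^ m \<Longrightarrow> t = s"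
  shows "bij (\<lambda>x. lin_assoc q h (x::'a) + \<alpha> * trace q n x + \<beta> * trace q n x ^ m
                 + (\<Sum>i=0..q-1. (\<theta> i ^ q - \<theta> i) * trace q n x ^ i))"
proof (rule bij_main[OF hF cop, where g = "\<lambda>t. \<alpha> * t + \<beta> * t ^ m + (\<Sum>i=0..q-1. (\<theta> i ^ q - \<theta> i) * t ^ i)"])
  fix x :: 'a
  show "lin_assoc q h x + \<alpha> * trace q n x + \<beta> * trace q n x ^ m
                 + (\<Sum>i=0..q-1. (\<theta> i ^ q - \<theta> i) * trace q n x ^ i)
        = lin_assoc q h x + (\<alpha> * trace q n x + \<beta> * trace q n x ^ m
                 + (\<Sum>i=0..q-1. (\<theta> i ^ q - \<theta> i) * trace q n x ^ i))"
    by (simp only: add.assoc)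
next
  fix x y :: 'a
  assume e: "trace q n (lin_assoc q h x + \<alpha> * trace q n x + \<beta> * trace q n x ^ m
                 + (\<Sum>i=0..q-1. (\<theta> i ^ q - \<theta> i) * trace q n x ^ i))
           = trace q n (lin_assoc q h y + \<alpha> * trace q n y + \<beta> * trace q n y ^ m
                 + (\<Sum>i=0..q-1. (\<theta> i ^ q - \<theta> i) * trace q n y ^ i))"
  have "(poly h 1 + trace q n \<alpha>) * trace q n x + trace q n \<beta> * trace q n x ^ m
      = (poly h 1 + trace q n \<alpha>) * trace q n y + trace q n \<beta> * trace q n y ^ m"
    using e by (simp only: trace_P[OF hF])
  thus "trace q n x = trace q n y" by (rule tr[OF trace_Fq trace_Fq])
qed

end

theorem corollary3p8:
  fixes p q n k m :: nat and h :: "'a::{finite,field} poly"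
  assumes "prime p" and "k \<ge> 1" and "q = p ^ k"
    and "n \<ge> 1" and "CARD('a) = q ^ n"
    and h_Fq: "\<forall>i. coeff h i \<in> subfield_q q"
    and h_gcd: "coprime h ((monom 1 n - 1) div [:-1, 1:])"
    and "m \<ge> 1" and "m < q - 1" and "coprime m (q - 1)"
  shows
    "(m = 1 \<longrightarrow>
       (\<forall>(\<alpha>::'a) (\<theta>::nat \<Rightarrow> 'a). trace q n \<alpha> \<noteq> - poly h 1 \<longrightarrow>
          bij (\<lambda>x. lin_assoc q h x + \<alpha> * trace q n x
                 + (\<Sum>i=0..q-1. (\<theta> i ^ q - \<theta> i) * trace q n x ^ i)))
       \<and> (\<not> p dvd n \<longrightarrow>
          (\<forall>(\<alpha>::'a) (\<theta>::nat \<Rightarrow> 'a). \<alpha> \<in> subfield_q q \<and> \<alpha> \<noteq> - poly h 1 / of_nat n \<longrightarrow>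
            bij (\<lambda>x. lin_assoc q h x + \<alpha> * trace q n x
                 + (\<Sum>i=0..q-1. (\<theta> i ^ q - \<theta> i) * trace q n x ^ i)))))
   \<and> (m > 1 \<longrightarrow>
       (\<forall>(\<alpha>::'a) (\<beta>::'a) (\<theta>::nat \<Rightarrow> 'a).
          trace q n \<alpha> = - poly h 1 \<and> trace q n \<beta> \<noteq> 0 \<longrightarrow>
          bij (\<lambda>x. lin_assoc q h x + \<alpha> * trace q n x + \<beta> * trace q n x ^ m
                 + (\<Sum>i=0..q-1. (\<theta> i ^ q - \<theta> i) * trace q n x ^ i)))
       \<and> (\<not> p dvd n \<longrightarrow>
          (\<forall>(\<beta>::'a) (\<theta>::nat \<Rightarrow> 'a). \<beta> \<in> subfield_q q \<and> \<beta> \<noteq> 0 \<longrightarrow>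
            bij (\<lambda>x. lin_assoc q h x + (- poly h 1 / of_nat n) * trace q n x
                 + \<beta> * trace q n x ^ m
                 + (\<Sum>i=0..q-1. (\<theta> i ^ q - \<theta> i) * trace q n x ^ i)))))"
proof -
  have charp: "CHAR('a) = p" using char_eq_ff[OF assms(1,2,4)] assms(3,5) by simp
  have qc: "q = CHAR('a) ^ k" using charp assms(3) by simp
  note card = assms(5)
  have hF: "\<forall>i. coeff h i ^ q = coeff h i" using h_Fq by (simp add: subfield_q_def)
  have h1F: "poly h 1 ^ q = poly h 1"
    using frob_sum[OF qc, of "\<lambda>i. coeff h i" "{..degree h}" 1] hF by (simp add: poly_altdef)
  have nF: "(of_nat j :: 'a) ^ q = of_nat j" for j
    by (induction j) (use q_pos[OF qc] frob1[OF qc] in auto)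
  have nnz: "\<not> p dvd n \<Longrightarrow> (of_nat n :: 'a) \<noteq> 0" by (simp add: of_nat_eq_0_iff_char_dvd charp)
  have I: "bij (\<lambda>x. lin_assoc q h x + \<alpha> * trace q n x
                 + (\<Sum>i=0..q-1. (\<theta> i ^ q - \<theta> i) * trace q n x ^ i))"
    if "trace q n \<alpha> \<noteq> - poly h 1" for \<alpha> :: 'a and \<theta>
  proof -
    have "bij (\<lambda>x. lin_assoc q h x + \<alpha> * trace q n x + 0 * trace q n x ^ m
                 + (\<Sum>i=0..q-1. (\<theta> i ^ q - \<theta> i) * trace q n x ^ i))"
    proof (rule main_gen[OF qc card hF h_gcd])
      fix t s :: 'a
      assume "(poly h 1 + trace q n \<alpha>) * t + trace q n 0 * t ^ m
            = (poly h 1 + trace q n \<alpha>) * s + trace q n 0 * s ^ m"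
      moreover have "poly h 1 + trace q n \<alpha> \<noteq> 0"
      proof
        assume "poly h 1 + trace q n \<alpha> = 0"
        hence "trace q n \<alpha> = - poly h 1" by (simp only: add_eq_0_iff)
        thus False using that by contradiction
      qed
      moreover have "trace q n (0::'a) = 0" unfolding trace_def using q_pos[OF qc] by (simp add: power_0_left)
      ultimately show "t = s" by simp
    qed
    thus ?thesis by simp
  qed
  have II: "bij (\<lambda>x. lin_assoc q h x + \<alpha> * trace q n x + \<beta> * trace q n x ^ m
                 + (\<Sum>i=0..q-1. (\<theta> i ^ q - \<theta> i) * trace q n x ^ i))"
    if "trace q n \<alpha> = - poly h 1" "trace q n \<beta> \<noteq> 0" for \<alpha> \<beta> :: 'a and \<theta>
  proof (rule main_gen[OF qc card hF h_gcd])
    fix t s :: 'a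
    assume ts: "t ^ q = t" "s ^ q = s" "(poly h 1 + trace q n \<alpha>) * t + trace q n \<beta> * t ^ m
            = (poly h 1 + trace q n \<alpha>) * s + trace q n \<beta> * s ^ m"
    hence "t ^ m = s ^ m" using that by simp
    thus "t = s" using pow_inj[OF qc card ts(1,2)] assms(8,10) by blast
  qed
  show ?thesis
  proof (intro conjI impI allI)
    fix \<alpha> :: 'a and \<theta>
    assume "trace q n \<alpha> \<noteq> - poly h 1"
    thus "bij (\<lambda>x. lin_assoc q h x + \<alpha> * trace q n x
                 + (\<Sum>i=0..q-1. (\<theta> i ^ q - \<theta> i) * trace q n x ^ i))" by (rule I)
  next
    fix \<alpha> :: 'a and \<theta>
    assume np: "\<not> p dvd n" and a: "\<alpha> \<in> subfield_q q \<and> \<alpha> \<noteq> - poly h 1 / of_nat n"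
    have "trace q n \<alpha> = of_nat n * \<alpha>" using a by (intro trace_const[OF qc card]) (simp add: subfield_q_def)
    have "trace q n \<alpha> \<noteq> - poly h 1"
    proof
      assume "trace q n \<alpha> = - poly h 1"
      hence e: "of_nat n * \<alpha> = - poly h 1" using \<open>trace q n \<alpha> = of_nat n * \<alpha>\<close> by simp
      have "\<alpha> = (of_nat n * \<alpha>) / of_nat n" using nnz[OF np] by simp
      hence "\<alpha> = - poly h 1 / of_nat n" by (simp only: e)
      thus False using a by simp
    qed
    thus "bij (\<lambda>x. lin_assoc q h x + \<alpha> * trace q n x
                 + (\<Sum>i=0..q-1. (\<theta> i ^ q - \<theta> i) * trace q n x ^ i))" by (rule I)
  next
    fix \<alpha> \<beta> :: 'a and \<theta>
    assume H: "trace q n \<alpha> = - poly h 1 \<and> trace q n \<beta> \<noteq> 0"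
    show "bij (\<lambda>x. lin_assoc q h x + \<alpha> * trace q n x + \<beta> * trace q n x ^ m
                 + (\<Sum>i=0..q-1. (\<theta> i ^ q - \<theta> i) * trace q n x ^ i))" using II[OF conjunct1[OF H] conjunct2[OF H]] .
  next
    fix \<beta> :: 'a and \<theta>
    assume np: "\<not> p dvd n" and b: "\<beta> \<in> subfield_q q \<and> \<beta> \<noteq> 0"
    define \<alpha> where "\<alpha> = - poly h 1 / of_nat n"
    have "\<alpha> ^ q = \<alpha>"
    proof -
      have "\<alpha> ^ q = (- poly h 1) ^ q / of_nat n ^ q" unfolding \<alpha>_def by (rule power_divide)
      also have "\<dots> = \<alpha>" using frob_minus[OF qc, of "poly h 1" 1] h1F nF[of n] by (simp add: \<alpha>_def)
      finally show ?thesis .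
    qed
    hence "trace q n \<alpha> = of_nat n * \<alpha>" by (rule trace_const[OF qc card])
    hence t1: "trace q n \<alpha> = - poly h 1" using nnz[OF np] by (simp add: \<alpha>_def)
    have "trace q n \<beta> = of_nat n * \<beta>" using b by (intro trace_const[OF qc card]) (simp add: subfield_q_def)
    hence t2: "trace q n \<beta> \<noteq> 0" using b nnz[OF np] by simp
    show "bij (\<lambda>x. lin_assoc q h x + (- poly h 1 / of_nat n) * trace q n x
                 + \<beta> * trace q n x ^ m
                 + (\<Sum>i=0..q-1. (\<theta> i ^ q - \<theta> i) * trace q n x ^ i))"
      using II[OF t1 t2, of \<theta>] unfolding \<alpha>_def .
  qed
qed

end
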